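(* Let $\alpha,\beta,\gamma\in\Phi^+$ and $w\in W$ with \[\ell(s_\alpha s_\beta s_\gamma w)=\ell(s_\beta s_\gamma w)-1=\ell(s_\gamma w)-2=\ell(w)-3.\] If $(\alpha,\beta)\ne0$ or $(\alpha,\gamma)\neq0$, then there exist $\alpha',\beta',\gamma'\in\Phi^+$ with $(\beta',\gamma')\ne0$, $s_\alpha s_\beta s_\gamma=s_{\alpha'}s_{\beta'}s_{\gamma'}$, and \[\ell(s_{\alpha'}s_{\beta'}s_{\gamma'}w)=\ell(s_{\beta'}s_{\gamma'}w)-1=\ell(s_{\gamma'}w)-2=\ell(w)-3.\]
   Context: $\Phi$ is the (finite, crystallographic) root system of a complex semisimple Lie algebra, $\Phi^+$ its positive roots with respect to a fixed basis, $W$ the Weyl group with length function $\ell$, $(\cdot,\cdot)$ a $W$-invariant scalar product, and $s_\beta$ the reflection in $\beta$. *)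

theory Defs
  imports "HOL-Analysis.Analysis"
begin

text \<open>Roots live in a real Euclidean space 'a; the inner product of 'a is the
scalar product (it is invariant under all reflections defined with it).\<close>

definition root_refl :: "'a::euclidean_space \<Rightarrow> 'a \<Rightarrow> 'a" where
  "root_refl \<alpha> v = v - ((2 * (v \<bullet> \<alpha>)) / (\<alpha> \<bullet> \<alpha>)) *\<^sub>R \<alpha>"

text \<open>Reduced crystallographic root system spanning the ambient space
(root system of a complex semisimple Lie algebra).\<close>
definition root_system :: "'a::euclidean_space set \<Rightarrow> bool" where
  "root_system \<Phi> \<longleftrightarrow>
     finite \<Phi> \<and> 0 \<notin> \<Phi> \<and> span \<Phi> = UNIV \<and>
     (\<forall>\<alpha>\<in>\<Phi>. root_refl \<alpha> ` \<Phi> = \<Phi>) \<and>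
     (\<forall>\<alpha>\<in>\<Phi>. \<forall>\<beta>\<in>\<Phi>. 2 * (\<beta> \<bullet> \<alpha>) / (\<alpha> \<bullet> \<alpha>) \<in> \<int>) \<and>
     (\<forall>\<alpha>\<in>\<Phi>. \<forall>c::real. c *\<^sub>R \<alpha> \<in> \<Phi> \<longrightarrow> c = 1 \<or> c = -1)"

definition root_basis :: "'a::euclidean_space set \<Rightarrow> 'a set \<Rightarrow> bool" where
  "root_basis \<Phi> \<Delta> \<longleftrightarrow>
     \<Delta> \<subseteq> \<Phi> \<and> independent \<Delta> \<and>
     (\<forall>\<alpha>\<in>\<Phi>. \<exists>c. (\<forall>d\<in>\<Delta>. c d \<in> \<int>) \<and> \<alpha> = (\<Sum>d\<in>\<Delta>. c d *\<^sub>R d) \<and>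
                 ((\<forall>d\<in>\<Delta>. c d \<ge> 0) \<or> (\<forall>d\<in>\<Delta>. c d \<le> 0)))"

definition pos_roots :: "'a::euclidean_space set \<Rightarrow> 'a set \<Rightarrow> 'a set" where
  "pos_roots \<Phi> \<Delta> = {\<alpha>\<in>\<Phi>. \<exists>c. (\<forall>d\<in>\<Delta>. c d \<ge> 0) \<and> \<alpha> = (\<Sum>d\<in>\<Delta>. c d *\<^sub>R d)}"

definition refl_prod :: "'a::euclidean_space list \<Rightarrow> 'a \<Rightarrow> 'a" where
  "refl_prod xs = foldr (\<circ>) (map root_refl xs) id"

text \<open>Weyl group: the group generated by the reflections s_alpha, alpha in Phi
(as a set of linear maps; products suffice since reflections are involutions).\<close>
definition weyl_group :: "'a::euclidean_space set \<Rightarrow> ('a \<Rightarrow> 'a) set" where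
  "weyl_group \<Phi> = {refl_prod xs | xs. set xs \<subseteq> \<Phi>}"

definition weyl_length :: "'a::euclidean_space set \<Rightarrow> ('a \<Rightarrow> 'a) \<Rightarrow> nat" where
  "weyl_length \<Delta> w = (LEAST n. \<exists>xs. set xs \<subseteq> \<Delta> \<and> length xs = n \<and> w = refl_prod xs)"

end

theory Submission
  imports Defs
begin


lemma rr_apply: "root_refl a v = v - ((2 * (v \<bullet> a)) / (a \<bullet> a)) *\<^sub>R a"
  by (simp add: root_refl_def)

lemma rr_linear: "linear (root_refl a)"
  by (rule linearI) (simp_all add: root_refl_def inner_add_left algebra_simps add_divide_distrib scaleR_add_left)

lemma rr_inner: "root_refl a u \<bullet> root_refl a v = u \<bullet> v"
proof (cases "a = 0")
  case True thus ?thesis by (simp add: root_refl_def)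
next
  case False
  hence "a \<bullet> a \<noteq> 0" by simp
  thus ?thesis unfolding root_refl_def
    by (simp add: inner_diff_left inner_diff_right algebra_simps inner_commute)
qed

lemma rr_invol[simp]: "root_refl a (root_refl a v) = v"
proof (cases "a = 0")
  case True thus ?thesis by (simp add: root_refl_def)
next
  case False
  hence "a \<bullet> a \<noteq> 0" by simp
  thus ?thesis unfolding root_refl_def
    by (simp add: inner_diff_left algebra_simps)
qed

lemma rr_comp_self[simp]: "root_refl a \<circ> root_refl a = id"
  by auto

lemma rr_self: "a \<noteq> 0 \<Longrightarrow> root_refl a a = - a"
  by (simp add: root_refl_def algebra_simps scaleR_2)

lemma rr_neg_root[simp]: "root_refl (- a) = root_refl a"
  by (rule ext) (simp add: root_refl_def)

lemma rr_neg[simp]: "root_refl a (- v) = - root_refl a v"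
  by (simp add: root_refl_def algebra_simps)

lemma rr_orth: "v \<bullet> a = 0 \<Longrightarrow> root_refl a v = v"
  by (simp add: root_refl_def)

lemma rr_conj: "root_refl (root_refl a b) = root_refl a \<circ> root_refl b \<circ> root_refl a"
proof (rule ext)
  fix v
  have n: "root_refl a b \<bullet> root_refl a b = b \<bullet> b" by (rule rr_inner)
  have i: "root_refl a v \<bullet> b = v \<bullet> root_refl a b"
    using rr_inner[of a "root_refl a v" b] by simp
  have l: "linear (root_refl a)" by (rule rr_linear)
  have "(root_refl a \<circ> root_refl b \<circ> root_refl a) v
      = root_refl a (root_refl a v - ((2 * (root_refl a v \<bullet> b)) / (b \<bullet> b)) *\<^sub>R b)"
    by (simp add: root_refl_def)
  also have "\<dots> = v - ((2 * (root_refl a v \<bullet> b)) / (b \<bullet> b)) *\<^sub>R root_refl a b"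
    using linear_diff[OF l] linear_cmul[OF l] by simp
  also have "\<dots> = root_refl (root_refl a b) v"
    unfolding rr_apply[of "root_refl a b" v] n i ..
  finally show "root_refl (root_refl a b) v = (root_refl a \<circ> root_refl b \<circ> root_refl a) v" ..
qed

lemma rr_commute: "a \<bullet> b = 0 \<Longrightarrow> root_refl a \<circ> root_refl b = root_refl b \<circ> root_refl a"
proof -
  assume h: "a \<bullet> b = 0"
  have "root_refl a b = b" using h by (simp add: rr_orth inner_commute)
  hence "root_refl b = root_refl a \<circ> root_refl b \<circ> root_refl a" using rr_conj[of a b] by simp
  hence e: "\<And>v. root_refl b v = root_refl a (root_refl b (root_refl a v))" by (metis comp_apply)
  show ?thesis by (rule ext) (metis comp_apply e rr_invol)
qed

lemma refl_prod_Nil[simp]: "refl_prod [] = id" by (simp add: refl_prod_def)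
lemma refl_prod_Cons[simp]: "refl_prod (x # xs) = root_refl x \<circ> refl_prod xs" by (simp add: refl_prod_def)
lemma refl_prod_append[simp]: "refl_prod (xs @ ys) = refl_prod xs \<circ> refl_prod ys"
  by (induction xs) (auto simp: o_assoc)

lemma refl_prod_linear: "linear (refl_prod xs)"
proof (induction xs)
  case Nil thus ?case using linear_id by (simp add: id_def)
next
  case (Cons a xs) thus ?case using linear_compose[OF Cons.IH rr_linear[of a]] by (simp add: o_def)
qed

lemma refl_prod_inv: "refl_prod (rev xs) \<circ> refl_prod xs = id"
proof (induction xs)
  case Nil thus ?case by simp
next
  case (Cons a xs)
  have "refl_prod (rev (a # xs)) \<circ> refl_prod (a # xs) = refl_prod (rev xs) \<circ> (root_refl a \<circ> root_refl a) \<circ> refl_prod xs"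
    by (simp only: refl_prod_append rev.simps refl_prod_Cons refl_prod_Nil o_assoc comp_id)
  also have "\<dots> = id" using Cons.IH by (simp add: fun_eq_iff)
  finally show ?case .
qed

lemma refl_prod_inv2: "refl_prod xs \<circ> refl_prod (rev xs) = id"
  using refl_prod_inv[of "rev xs"] by simp



locale rsys =
  fixes Phi Delta :: "'a::euclidean_space set"
  assumes rs: "root_system Phi" and rb: "root_basis Phi Delta"
begin

abbreviation "pos \<equiv> pos_roots Phi Delta"

lemma finPhi: "finite Phi" using rs by (simp add: root_system_def)

lemma zero_notin: "0 \<notin> Phi" using rs by (simp add: root_system_def)

lemma refl_closed: "a \<in> Phi \<Longrightarrow> b \<in> Phi \<Longrightarrow> root_refl a b \<in> Phi"
  using rs unfolding root_system_def by blast

lemma neg_closed: "a \<in> Phi \<Longrightarrow> - a \<in> Phi"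
proof -
  assume a: "a \<in> Phi"
  hence "a \<noteq> 0" using zero_notin by auto
  hence "root_refl a a = - a" by (rule rr_self)
  thus ?thesis using refl_closed[OF a a] by simp
qed

lemma integral: "a \<in> Phi \<Longrightarrow> b \<in> Phi \<Longrightarrow> 2 * (b \<bullet> a) / (a \<bullet> a) \<in> \<int>"
  using rs unfolding root_system_def by blast

lemma reduced: "a \<in> Phi \<Longrightarrow> c *\<^sub>R a \<in> Phi \<Longrightarrow> c = 1 \<or> c = -1"
  using rs unfolding root_system_def by blast

lemma Delta_sub: "Delta \<subseteq> Phi" using rb by (simp add: root_basis_def)

lemma finDelta: "finite Delta" using Delta_sub finPhi finite_subset by blast

lemma indepDelta: "independent Delta" using rb by (simp add: root_basis_def)

lemma pos_sub: "pos \<subseteq> Phi" by (auto simp: pos_roots_def)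

lemma nz: "a \<in> Phi \<Longrightarrow> a \<noteq> 0" using zero_notin by auto

lemma coeff_unique:
  assumes "(\<Sum>d\<in>Delta. a d *\<^sub>R d) = (\<Sum>d\<in>Delta. b d *\<^sub>R d)" "d \<in> Delta"
  shows "a d = b d"
proof (rule ccontr)
  assume "a d \<noteq> b d"
  hence 1: "\<exists>v\<in>Delta. (\<lambda>v. a v - b v) v \<noteq> 0" using assms(2) by auto
  have 2: "(\<Sum>v\<in>Delta. (\<lambda>v. a v - b v) v *\<^sub>R v) = 0"
    using assms(1) by (simp add: scaleR_diff_left sum_subtractf)
  have "dependent Delta" unfolding dependent_finite[OF finDelta]
    using 1 2 by (intro exI[of _ "\<lambda>v. a v - b v"] conjI)
  thus False using indepDelta by simp
qed

definition ht :: "'a \<Rightarrow> real" where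
  "ht = (SOME h. linear h \<and> (\<forall>d\<in>Delta. h d = 1))"

lemma ht_props: "linear ht \<and> (\<forall>d\<in>Delta. ht d = 1)"
proof -
  have "\<exists>h::'a\<Rightarrow>real. linear h \<and> (\<forall>d\<in>Delta. h d = 1)"
    using linear_independent_extend[OF indepDelta, of "\<lambda>_. 1"] by simp
  thus ?thesis unfolding ht_def by (rule someI_ex)
qed

lemma ht_lin: "linear ht" using ht_props by simp

lemma ht_sum: "ht (\<Sum>d\<in>Delta. c d *\<^sub>R d) = (\<Sum>d\<in>Delta. c d)"
  using ht_props by (simp add: linear_sum linear_scale)

lemma ht_pos: "t \<in> pos \<Longrightarrow> ht t > 0"
proof -
  assume t: "t \<in> pos"
  then obtain c where c: "\<forall>d\<in>Delta. c d \<ge> 0" "t = (\<Sum>d\<in>Delta. c d *\<^sub>R d)"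
    by (auto simp: pos_roots_def)
  have "ht t = (\<Sum>d\<in>Delta. c d)" using c ht_sum by simp
  moreover have "(\<Sum>d\<in>Delta. c d) \<ge> 0" using c by (simp add: sum_nonneg)
  moreover have "(\<Sum>d\<in>Delta. c d) \<noteq> 0"
  proof
    assume "(\<Sum>d\<in>Delta. c d) = 0"
    hence "\<forall>d\<in>Delta. c d = 0" using sum_nonneg_eq_0_iff[OF finDelta] c(1) by blast
    hence "t = 0" using c(2) by simp
    thus False using t pos_sub zero_notin by auto
  qed
  ultimately show ?thesis by simp
qed

lemma ht_neg: "- t \<in> pos \<Longrightarrow> ht t < 0"
  using ht_pos[of "-t"] linear_neg[OF ht_lin] by simp

lemma not_both: "t \<in> pos \<Longrightarrow> - t \<in> pos \<Longrightarrow> False"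
  using ht_pos ht_neg by fastforce

lemma dichot: "r \<in> Phi \<Longrightarrow> r \<in> pos \<or> - r \<in> pos"
proof -
  assume r: "r \<in> Phi"
  have "\<forall>\<alpha>\<in>Phi. \<exists>c. (\<forall>d\<in>Delta. c d \<in> \<int>) \<and> \<alpha> = (\<Sum>d\<in>Delta. c d *\<^sub>R d) \<and>
                 ((\<forall>d\<in>Delta. c d \<ge> 0) \<or> (\<forall>d\<in>Delta. c d \<le> 0))"
    using rb unfolding root_basis_def by (elim conjE)
  from bspec[OF this r] obtain c where c: "r = (\<Sum>d\<in>Delta. c d *\<^sub>R d)" "(\<forall>d\<in>Delta. c d \<ge> 0) \<or> (\<forall>d\<in>Delta. c d \<le> 0)"
    by (elim exE conjE) (intro that)
  show ?thesis
  proof (cases "\<forall>d\<in>Delta. c d \<ge> 0")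
    case True
    have "r \<in> pos" unfolding pos_roots_def mem_Collect_eq
      using r c(1) True by (intro conjI exI[of _ c]) auto
    thus ?thesis by simp
  next
    case False
    hence "\<forall>d\<in>Delta. - c d \<ge> 0" using c by auto
    moreover have "- r = (\<Sum>d\<in>Delta. (- c d) *\<^sub>R d)" using c by (simp add: sum_negf)
    ultimately have "- r \<in> pos" using neg_closed[OF r] unfolding pos_roots_def mem_Collect_eq
      by (intro conjI exI[of _ "\<lambda>d. - c d"]) auto
    thus ?thesis by simp
  qed
qed

lemma Delta_pos: "d \<in> Delta \<Longrightarrow> d \<in> pos"
proof -
  assume d: "d \<in> Delta"
  have "d = (\<Sum>e\<in>Delta. (if e = d then 1 else 0) *\<^sub>R e)"
  proof -
    have "(\<Sum>e\<in>Delta. (if e = d then 1 else 0) *\<^sub>R e) = (\<Sum>e\<in>Delta. if e = d then e else 0)"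
      by (rule sum.cong) auto
    thus ?thesis using d finDelta by simp
  qed
  moreover have "\<forall>e\<in>Delta. (if e = d then 1 else 0::real) \<ge> 0" by simp
  ultimately show ?thesis using d Delta_sub unfolding pos_roots_def mem_Collect_eq
    by (intro conjI exI[of _ "\<lambda>e. if e = d then 1 else 0"]) auto
qed

end

context rsys begin

lemma simple_refl_pos:
  assumes x: "x \<in> Delta" and t: "t \<in> pos" and ne: "t \<noteq> x"
  shows "root_refl x t \<in> pos"
proof -
  obtain c where c: "\<forall>d\<in>Delta. c d \<ge> 0" "t = (\<Sum>d\<in>Delta. c d *\<^sub>R d)"
    using t by (auto simp: pos_roots_def)
  define k where "k = 2 * (t \<bullet> x) / (x \<bullet> x)"
  have kx: "(\<Sum>d\<in>Delta. (if d = x then k else 0) *\<^sub>R d) = k *\<^sub>R x"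
  proof -
    have "(\<Sum>d\<in>Delta. (if d = x then k else 0) *\<^sub>R d) = (\<Sum>d\<in>Delta. if d = x then k *\<^sub>R x else 0)"
      by (rule sum.cong) auto
    thus ?thesis using x finDelta by simp
  qed
  have sx: "root_refl x t = (\<Sum>d\<in>Delta. (c d - (if d = x then k else 0)) *\<^sub>R d)"
    unfolding rr_apply k_def[symmetric] using c(2) kx[symmetric]
    by (simp add: scaleR_diff_left sum_subtractf)
  have tP: "t \<in> Phi" using t pos_sub by auto
  have xP: "x \<in> Phi" using x Delta_sub by auto
  have sP: "root_refl x t \<in> Phi" using refl_closed[OF xP tP] .
  show ?thesis
  proof (rule ccontr)
    assume np: "root_refl x t \<notin> pos"
    hence "- root_refl x t \<in> pos" using dichot[OF sP] by auto
    then obtain e where e: "\<forall>d\<in>Delta. e d \<ge> 0" "- root_refl x t = (\<Sum>d\<in>Delta. e d *\<^sub>R d)"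
      by (auto simp: pos_roots_def)
    have "(\<Sum>d\<in>Delta. (- e d) *\<^sub>R d) = (\<Sum>d\<in>Delta. (c d - (if d = x then k else 0)) *\<^sub>R d)"
      using e(2) sx by (metis (no_types, lifting) minus_equation_iff scaleR_minus_left sum.cong sum_negf)
    hence eq: "\<And>d. d \<in> Delta \<Longrightarrow> - e d = c d - (if d = x then k else 0)"
      using coeff_unique[of "\<lambda>d. - e d" "\<lambda>d. c d - (if d = x then k else 0)"] by simp
    have z: "\<And>d. d \<in> Delta \<Longrightarrow> d \<noteq> x \<Longrightarrow> c d = 0"
      using eq e(1) c(1) by (metis add.inverse_neutral diff_zero neg_le_0_iff_le order_antisym)
    have "t = (\<Sum>d\<in>Delta. (if d = x then c x *\<^sub>R x else 0))"
      unfolding c(2) by (rule sum.cong) (auto simp: z)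
    also have "\<dots> = c x *\<^sub>R x" using x finDelta by simp
    finally have tx: "t = c x *\<^sub>R x" .
    have "c x = 1 \<or> c x = -1" using reduced[OF xP] tP tx by simp
    moreover have "c x \<ge> 0" using c(1) x by auto
    ultimately have "c x = 1" by auto
    thus False using tx ne by simp
  qed
qed

definition dword :: "('a \<Rightarrow> 'a) \<Rightarrow> bool" where
  "dword v \<longleftrightarrow> (\<exists>ys. set ys \<subseteq> Delta \<and> v = refl_prod ys)"

lemma pos_refl_word_aux:
  "\<forall>t\<in>pos. ht t < real n \<longrightarrow> (\<exists>ys. set ys \<subseteq> Delta \<and> root_refl t = refl_prod ys)"
proof (induction n)
  case 0 thus ?case using ht_pos by fastforce
next
  case (Suc n)
  show ?case
  proof (intro ballI impI)
    fix t assume t: "t \<in> pos" and htn: "ht t < real (Suc n)"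
    show "\<exists>ys. set ys \<subseteq> Delta \<and> root_refl t = refl_prod ys"
    proof (cases "t \<in> Delta")
      case True thus ?thesis by (intro exI[of _ "[t]"]) simp
    next
      case False
      obtain c where c: "\<forall>d\<in>Delta. c d \<ge> 0" "t = (\<Sum>d\<in>Delta. c d *\<^sub>R d)"
        using t by (auto simp: pos_roots_def)
      have tP: "t \<in> Phi" using t pos_sub by auto
      have "t \<bullet> t > 0" using nz[OF tP] by simp
      moreover have "t \<bullet> t = (\<Sum>d\<in>Delta. c d * (d \<bullet> t))"
        by (subst (1) c(2)) (simp add: inner_sum_left)
      ultimately have "\<exists>d\<in>Delta. c d * (d \<bullet> t) > 0"
        by (metis (no_types, lifting) not_less sum_nonpos)
      then obtain d where d: "d \<in> Delta" "c d * (d \<bullet> t) > 0" by blast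
      have dt: "t \<bullet> d > 0" using d(2) c(1) d(1)
        by (metis inner_commute less_eq_real_def linorder_not_less mult_nonneg_nonpos)
      have dP: "d \<in> Phi" using d Delta_sub by auto
      define k where "k = 2 * (t \<bullet> d) / (d \<bullet> d)"
      have kZ: "k \<in> \<int>" using integral[OF dP tP] k_def by simp
      have kp: "k > 0" using dt nz[OF dP] unfolding k_def by simp
      have k1: "k \<ge> 1" using kZ kp 
      proof -
        obtain m where m: "k = of_int m" using kZ Ints_cases by blast
        hence "m > 0" using kp by simp
        hence "m \<ge> 1" by simp
        thus ?thesis using m by simp
      qed
      have ne: "t \<noteq> d" using False d by auto
      have t'pos: "root_refl d t \<in> pos" using simple_refl_pos[OF d(1) t ne] .
      have "ht (root_refl d t) = ht t - k * ht d"
        unfolding rr_apply k_def[symmetric] using ht_lin by (simp add: linear_diff linear_scale)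
      also have "\<dots> = ht t - k" using ht_props d by simp
      finally have "ht (root_refl d t) < real n" using htn k1 by simp
      then obtain ys where ys: "set ys \<subseteq> Delta" "root_refl (root_refl d t) = refl_prod ys"
        using Suc.IH t'pos by blast
      have "root_refl t = root_refl d \<circ> root_refl (root_refl d t) \<circ> root_refl d"
        using rr_conj[of d "root_refl d t"] by simp
      also have "\<dots> = refl_prod (d # ys @ [d])" using ys by (simp add: o_assoc)
      finally show ?thesis using ys d by (intro exI[of _ "d # ys @ [d]"]) auto
    qed
  qed
qed

lemma refl_word: "a \<in> Phi \<Longrightarrow> \<exists>ys. set ys \<subseteq> Delta \<and> root_refl a = refl_prod ys"
proof -
  assume a: "a \<in> Phi"
  have *: "\<And>t. t \<in> pos \<Longrightarrow> \<exists>ys. set ys \<subseteq> Delta \<and> root_refl t = refl_prod ys"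
    using pos_refl_word_aux reals_Archimedean2 by blast
  show ?thesis using dichot[OF a] * rr_neg_root by metis
qed

lemma word_Delta: "set xs \<subseteq> Phi \<Longrightarrow> \<exists>ys. set ys \<subseteq> Delta \<and> refl_prod xs = refl_prod ys"
proof (induction xs)
  case Nil thus ?case by (intro exI[of _ "[]"]) simp
next
  case (Cons a xs)
  then obtain ys where ys: "set ys \<subseteq> Delta" "refl_prod xs = refl_prod ys" by auto
  from refl_word[of a] Cons.prems obtain zs where zs: "set zs \<subseteq> Delta" "root_refl a = refl_prod zs" by auto
  show ?case using ys zs by (intro exI[of _ "zs @ ys"]) auto
qed

lemma word_maps: "set xs \<subseteq> Phi \<Longrightarrow> r \<in> Phi \<Longrightarrow> refl_prod xs r \<in> Phi"
  by (induction xs arbitrary: r) (auto intro: refl_closed)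

lemma inv_words: "refl_prod xs = refl_prod ys \<Longrightarrow> refl_prod (rev xs) = refl_prod (rev ys)"
proof -
  assume e: "refl_prod xs = refl_prod ys"
  have "refl_prod (rev xs) = refl_prod (rev xs) \<circ> (refl_prod ys \<circ> refl_prod (rev ys))"
    using refl_prod_inv2[of ys] by simp
  also have "\<dots> = (refl_prod (rev xs) \<circ> refl_prod xs) \<circ> refl_prod (rev ys)" using e by (simp add: o_assoc)
  also have "\<dots> = refl_prod (rev ys)" using refl_prod_inv[of xs] by simp
  finally show ?thesis .
qed

lemma exchange:
  "set xs \<subseteq> Delta \<Longrightarrow> t \<in> pos \<Longrightarrow> - (refl_prod (rev xs) t) \<in> pos \<Longrightarrow>
   \<exists>ys. set ys \<subseteq> Delta \<and> length ys < length xs \<and> root_refl t \<circ> refl_prod xs = refl_prod ys"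
proof (induction xs arbitrary: t)
  case Nil thus ?case using not_both by auto
next
  case (Cons x xs)
  show ?case
  proof (cases "t = x")
    case True thus ?thesis using Cons.prems by (intro exI[of _ xs]) (auto simp: o_assoc[symmetric])
  next
    case False
    have x: "x \<in> Delta" using Cons.prems by auto
    have t': "root_refl x t \<in> pos" using simple_refl_pos[OF x Cons.prems(2) False] .
    have "- (refl_prod (rev xs) (root_refl x t)) \<in> pos" using Cons.prems(3) by simp
    moreover have "set xs \<subseteq> Delta" using Cons.prems(1) by simp
    ultimately have "\<exists>ys. set ys \<subseteq> Delta \<and> length ys < length xs \<and> root_refl (root_refl x t) \<circ> refl_prod xs = refl_prod ys"
      using Cons.IH[OF _ t'] by blast
    then obtain ys where ys: "set ys \<subseteq> Delta" "length ys < length xs"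
        "root_refl (root_refl x t) \<circ> refl_prod xs = refl_prod ys" by blast
    have "root_refl t \<circ> refl_prod (x # xs) = root_refl x \<circ> (root_refl (root_refl x t) \<circ> refl_prod xs)"
      by (simp add: rr_conj fun_eq_iff)
    also have "\<dots> = refl_prod (x # ys)" by (simp only: ys(3) refl_prod_Cons)
    finally have e: "root_refl t \<circ> refl_prod (x # xs) = refl_prod (x # ys)" .
    show ?thesis
    proof (intro exI[of _ "x # ys"] conjI)
      show "set (x # ys) \<subseteq> Delta" using ys x by auto
      show "length (x # ys) < length (x # xs)" using ys by simp
      show "root_refl t \<circ> refl_prod (x # xs) = refl_prod (x # ys)" by (rule e)
    qed
  qed
qed

lemma len_le: "set ys \<subseteq> Delta \<Longrightarrow> weyl_length Delta (refl_prod ys) \<le> length ys"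
  unfolding weyl_length_def by (rule Least_le) blast

lemma len_word: "set xs \<subseteq> Phi \<Longrightarrow>
   \<exists>ys. set ys \<subseteq> Delta \<and> length ys = weyl_length Delta (refl_prod xs) \<and> refl_prod xs = refl_prod ys"
proof -
  assume "set xs \<subseteq> Phi"
  then obtain zs where "set zs \<subseteq> Delta" "refl_prod xs = refl_prod zs" using word_Delta by blast
  hence ex: "\<exists>n ys. set ys \<subseteq> Delta \<and> length ys = n \<and> refl_prod xs = refl_prod ys" by blast
  show ?thesis unfolding weyl_length_def
    using LeastI_ex[OF ex] by metis
qed

lemma dec:
  assumes xs: "set xs \<subseteq> Phi" and t: "t \<in> pos" and n: "- (refl_prod (rev xs) t) \<in> pos"
  shows "weyl_length Delta (root_refl t \<circ> refl_prod xs) + 1 \<le> weyl_length Delta (refl_prod xs)"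
proof -
  obtain ds where ds: "set ds \<subseteq> Delta" "length ds = weyl_length Delta (refl_prod xs)" "refl_prod xs = refl_prod ds"
    using len_word[OF xs] by blast
  have "- (refl_prod (rev ds) t) \<in> pos" using n inv_words[OF ds(3)] by simp
  then obtain ys where ys: "set ys \<subseteq> Delta" "length ys < length ds" "root_refl t \<circ> refl_prod ds = refl_prod ys"
    using exchange[OF ds(1) t] by blast
  have "weyl_length Delta (root_refl t \<circ> refl_prod xs) \<le> length ys" using ys ds(3) len_le by simp
  thus ?thesis using ys(2) ds(2) by simp
qed

lemma inc:
  assumes xs: "set xs \<subseteq> Phi" and t: "t \<in> pos" and p: "refl_prod (rev xs) t \<in> pos"
  shows "weyl_length Delta (refl_prod xs) + 1 \<le> weyl_length Delta (root_refl t \<circ> refl_prod xs)"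
proof -
  have tP: "t \<in> Phi" using t pos_sub by auto
  have l: "linear (refl_prod (rev xs))" by (rule refl_prod_linear)
  have "- (refl_prod (rev (t # xs)) t) = refl_prod (rev xs) t"
    using rr_self[OF nz[OF tP]] linear_neg[OF l] by simp
  hence "- (refl_prod (rev (t # xs)) t) \<in> pos" using p by simp
  from dec[of "t # xs" t, OF _ t this] xs tP
  have "weyl_length Delta (root_refl t \<circ> (root_refl t \<circ> refl_prod xs)) + 1 \<le> weyl_length Delta (root_refl t \<circ> refl_prod xs)"
    by simp
  moreover have "root_refl t \<circ> (root_refl t \<circ> refl_prod xs) = refl_prod xs" by (simp add: fun_eq_iff)
  ultimately show ?thesis by simp
qed

lemma neg_of_dec:
  assumes xs: "set xs \<subseteq> Phi" and t: "t \<in> pos"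
    and h: "weyl_length Delta (root_refl t \<circ> refl_prod xs) < weyl_length Delta (refl_prod xs)"
  shows "- (refl_prod (rev xs) t) \<in> pos"
proof -
  have "refl_prod (rev xs) t \<in> Phi" using word_maps[of "rev xs" t] xs t pos_sub by auto
  thus ?thesis using dichot inc[OF xs t] h by fastforce
qed

end


lemma int_gt1: "(k::real) \<in> \<int> \<Longrightarrow> k > 1 \<Longrightarrow> k \<ge> 2"
proof -
  assume "k \<in> \<int>" "k > 1"
  then obtain m where m: "k = of_int m" "m > 1" by (metis Ints_cases of_int_less_iff of_int_1)
  hence "m \<ge> 2" by simp
  thus ?thesis using m by simp
qed

lemma side:
  fixes p p' a1 b1 a2 b2 :: real
  assumes "p \<in> \<int>" "p' \<in> \<int>" "p * p' > 0" "p > 0 \<longleftrightarrow> p' > 0"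
    and "a1 > 0" "b1 > 0" "a2 < 0" "b2 > 0"
    and F1: "b1 - p' * a1 < 0 \<or> a2 - p * b2 > 0"
    and F3: "a1 - p * b1 < 0 \<or> b2 - p' * a2 < 0"
  shows "p * p' \<ge> 2"
    and "p > 0 \<Longrightarrow> b1 < p' * a1 \<and> a1 < p * b1"
    and "p < 0 \<Longrightarrow> a2 > p * b2 \<and> b2 < p' * a2"
proof -
  have pz: "p \<noteq> 0" using assms(3) by auto
  have P: "p > 0 \<Longrightarrow> b1 < p' * a1 \<and> a1 < p * b1"
  proof -
    assume p: "p > 0"
    hence p': "p' > 0" using assms(4) by simp
    have "p * b2 > 0" using p assms(8) by simp
    hence "b1 < p' * a1" using F1 assms(7) by linarith
    moreover have "p' * a2 < 0" using p' assms(7) by (simp add: mult_pos_neg)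
    hence "a1 < p * b1" using F3 assms(8) by linarith
    ultimately show ?thesis by simp
  qed
  have N: "p < 0 \<Longrightarrow> a2 > p * b2 \<and> b2 < p' * a2"
  proof -
    assume p: "p < 0"
    hence p': "p' < 0" using assms(4) pz assms(3) by (meson linorder_neqE_linordered_idom not_less_iff_gr_or_eq zero_less_mult_iff)
    have "p' * a1 < 0" using p' assms(5) by (simp add: mult_neg_pos)
    hence "a2 > p * b2" using F1 assms(6) by linarith
    moreover have "p * b1 < 0" using p assms(6) by (simp add: mult_neg_pos)
    hence "b2 < p' * a2" using F3 assms(5) by linarith
    ultimately show ?thesis by simp
  qed
  have "p * p' > 1"
  proof (cases "p > 0")
    case True
    with P have h: "b1 < p' * a1" "a1 < p * b1" by auto
    have p': "p' > 0" using True assms(4) by simp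
    have "p' * a1 < p' * (p * b1)" using h(2) p' by simp
    hence "b1 < (p * p') * b1" using h(1) by (simp add: algebra_simps)
    hence "1 * b1 < (p * p') * b1" by simp
    thus ?thesis using assms(6) by (meson mult_less_cancel_right_pos)
  next
    case False
    hence p: "p < 0" using pz by simp
    with N have h: "a2 > p * b2" "b2 < p' * a2" by auto
    have p': "p' < 0" using p assms(3) by (meson not_less_iff_gr_or_eq zero_less_mult_iff)
    have "p' * a2 < p' * (p * b2)" using h(1) p' by simp
    hence "b2 < (p * p') * b2" using h(2) by (simp add: algebra_simps)
    hence "1 * b2 < (p * p') * b2" by simp
    thus ?thesis using assms(8) by (meson mult_less_cancel_right_pos)
  qed
  moreover have "p * p' \<in> \<int>" using assms(1,2) by simp
  ultimately show "p * p' \<ge> 2" using int_gt1 by blast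
  show "p > 0 \<Longrightarrow> b1 < p' * a1 \<and> a1 < p * b1" by (rule P)
  show "p < 0 \<Longrightarrow> a2 > p * b2 \<and> b2 < p' * a2" by (rule N)
qed

lemma core:
  fixes p p' q q' a1 b1 c1 a2 b2 c2 :: real
  assumes ints: "p \<in> \<int>" "p' \<in> \<int>" "q \<in> \<int>" "q' \<in> \<int>"
    and sp: "p * p' > 0" "p > 0 \<longleftrightarrow> p' > 0" and sq: "q * q' > 0" "q > 0 \<longleftrightarrow> q' > 0"
    and h: "a1 > 0" "b1 > 0" "c1 > 0" "a2 < 0" "b2 > 0" "c2 > 0"
    and bes: "p * p' + q * q' \<le> 4"
    and eq: "p * p' + q * q' = 4 \<Longrightarrow> 2 * a1 = p * b1 + q * c1 \<and> 2 * a2 = p * b2 + q * c2"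
    and F1: "b1 - p' * a1 < 0 \<or> a2 - p * b2 > 0"
    and F3: "a1 - p * b1 < 0 \<or> b2 - p' * a2 < 0"
    and F2: "c1 - q' * a1 < 0 \<or> a2 - q * c2 > 0"
    and F4: "a1 - q * c1 < 0 \<or> c2 - q' * a2 < 0"
  shows False
proof -
  note S = side[OF ints(1,2) sp h(1,2,4,5) F1 F3]
  note T = side[OF ints(3,4) sq h(1,3,4,6) F2 F4]
  have pp: "p * p' = 2" "q * q' = 2" using S(1) T(1) bes by linarith+
  have e: "2 * a1 = p * b1 + q * c1" "2 * a2 = p * b2 + q * c2" using eq pp by auto
  have pz: "p \<noteq> 0" "q \<noteq> 0" using pp by auto
  show False
  proof (cases "p > 0")
    case pP: True
    show False
    proof (cases "q > 0")
      case True
      thus False using S(2)[OF pP] T(2)[OF True] e by linarith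
    next
      case False
      hence q: "q < 0" using pz by simp
      have "p * b1 < p * (p' * a1)" using S(2)[OF pP] pP by simp
      hence "p * b1 < 2 * a1" using pp by (simp add: algebra_simps)
      moreover have "q * c1 < 0" using q h(3) by (simp add: mult_neg_pos)
      ultimately show False using e by linarith
    qed
  next
    case False
    hence pN: "p < 0" using pz by simp
    show False
    proof (cases "q > 0")
      case qP: True
      have "q * c1 < q * (q' * a1)" using T(2)[OF qP] qP by simp
      hence "q * c1 < 2 * a1" using pp by (simp add: algebra_simps)
      moreover have "p * b1 < 0" using pN h(2) by (simp add: mult_neg_pos)
      ultimately show False using e by linarith
    next
      case False
      hence q: "q < 0" using pz by simp
      show False using S(3)[OF pN] T(3)[OF q] e by linarith
    qed
  qed
qed

lemma bessel:
  fixes a b c :: "'a::real_inner"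
  assumes bc: "b \<bullet> c = 0" and A: "a \<bullet> a > 0" and B: "b \<bullet> b > 0" and C: "c \<bullet> c > 0"
  defines "p \<equiv> 2 * (a \<bullet> b) / (b \<bullet> b)" and "p' \<equiv> 2 * (a \<bullet> b) / (a \<bullet> a)"
      and "q \<equiv> 2 * (a \<bullet> c) / (c \<bullet> c)" and "q' \<equiv> 2 * (a \<bullet> c) / (a \<bullet> a)"
  shows "p * p' + q * q' \<le> 4" and "p * p' + q * q' = 4 \<Longrightarrow> a = (p / 2) *\<^sub>R b + (q / 2) *\<^sub>R c"
proof -
  define v where "v = a - (p / 2) *\<^sub>R b - (q / 2) *\<^sub>R c"
  define x where "x = a \<bullet> b"
  define y where "y = a \<bullet> c"
  have cb: "c \<bullet> b = 0" using bc by (simp add: inner_commute)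
  have "v \<bullet> v = a \<bullet> a - p * x - q * y + (p/2)^2 * (b \<bullet> b) + (q/2)^2 * (c \<bullet> c)"
    unfolding v_def x_def y_def
    by (simp add: inner_diff_left inner_diff_right inner_add_left inner_add_right bc cb inner_commute power2_eq_square algebra_simps)
  also have "\<dots> = a \<bullet> a - x^2 / (b \<bullet> b) - y^2 / (c \<bullet> c)"
    unfolding p_def q_def x_def[symmetric] y_def[symmetric] using B C
    by (simp add: field_simps power2_eq_square)
  finally have vv: "v \<bullet> v = a \<bullet> a - x^2 / (b \<bullet> b) - y^2 / (c \<bullet> c)" .
  have pq: "p * p' + q * q' = 4 * (x^2 / (b \<bullet> b) + y^2 / (c \<bullet> c)) / (a \<bullet> a)"
    unfolding p_def p'_def q_def q'_def x_def[symmetric] y_def[symmetric] using A B C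
    by (simp add: field_simps power2_eq_square)
  have "x^2 / (b \<bullet> b) + y^2 / (c \<bullet> c) \<le> a \<bullet> a" using vv inner_ge_zero[of v] by linarith
  thus "p * p' + q * q' \<le> 4" unfolding pq using A by (simp add: divide_le_eq)
  assume "p * p' + q * q' = 4"
  hence "x^2 / (b \<bullet> b) + y^2 / (c \<bullet> c) = a \<bullet> a" unfolding pq using A by (simp add: field_simps)
  hence "v \<bullet> v = 0" using vv by simp
  hence "v = 0" by simp
  thus "a = (p / 2) *\<^sub>R b + (q / 2) *\<^sub>R c" unfolding v_def by (simp add: algebra_simps)
qed


context rsys begin

lemma ht_root_neg: "r \<in> Phi \<Longrightarrow> r \<notin> pos \<Longrightarrow> ht r < 0"
  using dichot ht_neg by blast
lemma ht_root_pos: "r \<in> Phi \<Longrightarrow> - r \<notin> pos \<Longrightarrow> ht r > 0"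
  using dichot ht_pos by blast

lemma ht_lin_comb: "linear f \<Longrightarrow> ht (f (u - c *\<^sub>R v)) = ht (f u) - c * ht (f v)"
  using ht_lin by (simp add: linear_diff linear_scale)

lemma pos_Phi: "t \<in> pos \<Longrightarrow> t \<in> Phi" using pos_sub by auto

lemma F1_ok:
  assumes P: "\<alpha> \<in> pos" "\<beta> \<in> pos" "\<gamma> \<in> pos" and ag: "\<alpha> \<bullet> \<gamma> \<noteq> 0"
    and n1: "- (Y \<gamma>) \<in> pos" and n2: "- (Y (root_refl \<gamma> \<beta>)) \<in> pos"
    and f: "root_refl \<alpha> \<beta> \<in> pos" "- (Y (root_refl \<gamma> \<alpha>)) \<in> pos"
  shows "\<exists>\<alpha>'\<in>pos. \<exists>\<beta>'\<in>pos. \<exists>\<gamma>'\<in>pos. \<beta>' \<bullet> \<gamma>' \<noteq> 0 \<and>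
     root_refl \<alpha> \<circ> root_refl \<beta> \<circ> root_refl \<gamma> = root_refl \<alpha>' \<circ> root_refl \<beta>' \<circ> root_refl \<gamma>' \<and>
     - (Y \<gamma>') \<in> pos \<and> - (Y (root_refl \<gamma>' \<beta>')) \<in> pos \<and> - (Y (root_refl \<gamma>' (root_refl \<beta>' \<alpha>'))) \<in> pos"
proof (intro bexI conjI)
  show "root_refl \<alpha> \<circ> root_refl \<beta> \<circ> root_refl \<gamma> = root_refl (root_refl \<alpha> \<beta>) \<circ> root_refl \<alpha> \<circ> root_refl \<gamma>"
    by (simp add: rr_conj fun_eq_iff)
  show "- (Y (root_refl \<gamma> (root_refl \<alpha> (root_refl \<alpha> \<beta>)))) \<in> pos" using n2 by simp
qed (use assms in auto)

lemma F3_ok: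
  assumes P: "\<alpha> \<in> pos" "\<beta> \<in> pos" "\<gamma> \<in> pos" and ag: "\<alpha> \<bullet> \<gamma> \<noteq> 0" and bc: "\<beta> \<bullet> \<gamma> = 0"
    and lY: "linear Y"
    and n1: "- (Y \<gamma>) \<in> pos" and n3: "- (Y (root_refl \<gamma> (root_refl \<beta> \<alpha>))) \<in> pos"
    and f: "root_refl \<beta> \<alpha> \<in> pos" "Y (root_refl \<gamma> (root_refl \<beta> (root_refl \<alpha> \<beta>))) \<in> pos"
  shows "\<exists>\<alpha>'\<in>pos. \<exists>\<beta>'\<in>pos. \<exists>\<gamma>'\<in>pos. \<beta>' \<bullet> \<gamma>' \<noteq> 0 \<and>
     root_refl \<alpha> \<circ> root_refl \<beta> \<circ> root_refl \<gamma> = root_refl \<alpha>' \<circ> root_refl \<beta>' \<circ> root_refl \<gamma>' \<and>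
     - (Y \<gamma>') \<in> pos \<and> - (Y (root_refl \<gamma>' \<beta>')) \<in> pos \<and> - (Y (root_refl \<gamma>' (root_refl \<beta>' \<alpha>'))) \<in> pos"
proof (intro bexI conjI)
  have bg: "root_refl \<beta> \<gamma> = \<gamma>" using bc by (simp add: rr_orth inner_commute)
  show "root_refl \<beta> \<alpha> \<bullet> \<gamma> \<noteq> 0" using rr_inner[of \<beta> \<alpha> \<gamma>] bg ag by simp
  show "root_refl \<alpha> \<circ> root_refl \<beta> \<circ> root_refl \<gamma> = root_refl \<beta> \<circ> root_refl (root_refl \<beta> \<alpha>) \<circ> root_refl \<gamma>"
    by (simp add: rr_conj fun_eq_iff)
  have bnz: "\<beta> \<noteq> 0" using nz pos_Phi P by auto
  have "root_refl (root_refl \<beta> \<alpha>) \<beta> = - root_refl \<beta> (root_refl \<alpha> \<beta>)"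
    by (simp add: rr_conj rr_self[OF bnz])
  hence "Y (root_refl \<gamma> (root_refl (root_refl \<beta> \<alpha>) \<beta>)) = - Y (root_refl \<gamma> (root_refl \<beta> (root_refl \<alpha> \<beta>)))"
    using linear_neg[OF lY] by simp
  thus "- Y (root_refl \<gamma> (root_refl (root_refl \<beta> \<alpha>) \<beta>)) \<in> pos" using f(2) by simp
qed (use assms in auto)

lemma F2_ok:
  assumes P: "\<alpha> \<in> pos" "\<beta> \<in> pos" "\<gamma> \<in> pos" and ab: "\<alpha> \<bullet> \<beta> \<noteq> 0" and bc: "\<beta> \<bullet> \<gamma> = 0"
    and n1: "- (Y \<gamma>) \<in> pos" and n2: "- (Y (root_refl \<gamma> \<beta>)) \<in> pos"
    and f: "root_refl \<alpha> \<gamma> \<in> pos" "- (Y (root_refl \<beta> \<alpha>)) \<in> pos"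
  shows "\<exists>\<alpha>'\<in>pos. \<exists>\<beta>'\<in>pos. \<exists>\<gamma>'\<in>pos. \<beta>' \<bullet> \<gamma>' \<noteq> 0 \<and>
     root_refl \<alpha> \<circ> root_refl \<beta> \<circ> root_refl \<gamma> = root_refl \<alpha>' \<circ> root_refl \<beta>' \<circ> root_refl \<gamma>' \<and>
     - (Y \<gamma>') \<in> pos \<and> - (Y (root_refl \<gamma>' \<beta>')) \<in> pos \<and> - (Y (root_refl \<gamma>' (root_refl \<beta>' \<alpha>'))) \<in> pos"
proof (intro bexI conjI)
  have bg: "root_refl \<beta> \<gamma> = \<gamma>" using bc by (simp add: rr_orth inner_commute)
  have gb: "root_refl \<gamma> \<beta> = \<beta>" using bc by (simp add: rr_orth)
  have com: "root_refl \<beta> \<circ> root_refl \<gamma> = root_refl \<gamma> \<circ> root_refl \<beta>" using rr_commute[OF bc] .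
  show "root_refl \<alpha> \<circ> root_refl \<beta> \<circ> root_refl \<gamma> = root_refl (root_refl \<alpha> \<gamma>) \<circ> root_refl \<alpha> \<circ> root_refl \<beta>"
    using com by (simp add: rr_conj fun_eq_iff)
  show "- Y \<beta> \<in> pos" using n2 gb by simp
  show "- (Y (root_refl \<beta> (root_refl \<alpha> (root_refl \<alpha> \<gamma>)))) \<in> pos" using n1 bg by simp
qed (use assms in auto)

lemma F4_ok:
  assumes P: "\<alpha> \<in> pos" "\<beta> \<in> pos" "\<gamma> \<in> pos" and ab: "\<alpha> \<bullet> \<beta> \<noteq> 0" and bc: "\<beta> \<bullet> \<gamma> = 0"
    and lY: "linear Y"
    and n2: "- (Y (root_refl \<gamma> \<beta>)) \<in> pos" and n3: "- (Y (root_refl \<gamma> (root_refl \<beta> \<alpha>))) \<in> pos"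
    and f: "root_refl \<gamma> \<alpha> \<in> pos" "Y (root_refl \<gamma> (root_refl \<beta> (root_refl \<alpha> \<gamma>))) \<in> pos"
  shows "\<exists>\<alpha>'\<in>pos. \<exists>\<beta>'\<in>pos. \<exists>\<gamma>'\<in>pos. \<beta>' \<bullet> \<gamma>' \<noteq> 0 \<and>
     root_refl \<alpha> \<circ> root_refl \<beta> \<circ> root_refl \<gamma> = root_refl \<alpha>' \<circ> root_refl \<beta>' \<circ> root_refl \<gamma>' \<and>
     - (Y \<gamma>') \<in> pos \<and> - (Y (root_refl \<gamma>' \<beta>')) \<in> pos \<and> - (Y (root_refl \<gamma>' (root_refl \<beta>' \<alpha>'))) \<in> pos"
proof (intro bexI conjI)
  have gb: "root_refl \<gamma> \<beta> = \<beta>" using bc by (simp add: rr_orth)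
  have com: "root_refl \<beta> \<circ> root_refl \<gamma> = root_refl \<gamma> \<circ> root_refl \<beta>" using rr_commute[OF bc] .
  have comp: "\<And>v. root_refl \<beta> (root_refl \<gamma> v) = root_refl \<gamma> (root_refl \<beta> v)"
    using com by (metis comp_apply)
  show "root_refl \<gamma> \<alpha> \<bullet> \<beta> \<noteq> 0" using rr_inner[of \<gamma> \<alpha> \<beta>] gb ab by simp
  show "root_refl \<alpha> \<circ> root_refl \<beta> \<circ> root_refl \<gamma> = root_refl \<gamma> \<circ> root_refl (root_refl \<gamma> \<alpha>) \<circ> root_refl \<beta>"
    using comp by (simp add: rr_conj fun_eq_iff)
  show "- Y \<beta> \<in> pos" using n2 gb by simp
  show "- (Y (root_refl \<beta> (root_refl \<gamma> \<alpha>))) \<in> pos" using n3 comp by simp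
  have gnz: "\<gamma> \<noteq> 0" using nz pos_Phi P by auto
  have "root_refl (root_refl \<gamma> \<alpha>) \<gamma> = - root_refl \<gamma> (root_refl \<alpha> \<gamma>)"
    by (simp add: rr_conj rr_self[OF gnz])
  hence "Y (root_refl \<beta> (root_refl (root_refl \<gamma> \<alpha>) \<gamma>)) = - Y (root_refl \<gamma> (root_refl \<beta> (root_refl \<alpha> \<gamma>)))"
    using linear_neg[OF lY] comp by simp
  thus "- Y (root_refl \<beta> (root_refl (root_refl \<gamma> \<alpha>) \<gamma>)) \<in> pos" using f(2) by simp
qed (use assms in auto)

end

context rsys begin

lemma combi:
  assumes P: "\<alpha> \<in> pos" "\<beta> \<in> pos" "\<gamma> \<in> pos" and bc: "\<beta> \<bullet> \<gamma> = 0"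
    and nz2: "\<alpha> \<bullet> \<beta> \<noteq> 0 \<or> \<alpha> \<bullet> \<gamma> \<noteq> 0"
    and lY: "linear Y" and YP: "\<And>r. r \<in> Phi \<Longrightarrow> Y r \<in> Phi"
    and n1: "- (Y \<gamma>) \<in> pos" and n2: "- (Y (root_refl \<gamma> \<beta>)) \<in> pos"
    and n3: "- (Y (root_refl \<gamma> (root_refl \<beta> \<alpha>))) \<in> pos"
  shows "\<exists>\<alpha>'\<in>pos. \<exists>\<beta>'\<in>pos. \<exists>\<gamma>'\<in>pos. \<beta>' \<bullet> \<gamma>' \<noteq> 0 \<and>
     root_refl \<alpha> \<circ> root_refl \<beta> \<circ> root_refl \<gamma> = root_refl \<alpha>' \<circ> root_refl \<beta>' \<circ> root_refl \<gamma>' \<and>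
     - (Y \<gamma>') \<in> pos \<and> - (Y (root_refl \<gamma>' \<beta>')) \<in> pos \<and> - (Y (root_refl \<gamma>' (root_refl \<beta>' \<alpha>'))) \<in> pos"
    (is ?G)
proof -
  have aP: "\<alpha> \<in> Phi" and bP: "\<beta> \<in> Phi" and gP: "\<gamma> \<in> Phi" using P pos_Phi by auto
  have bg: "root_refl \<beta> \<gamma> = \<gamma>" using bc by (simp add: rr_orth inner_commute)
  have gb: "root_refl \<gamma> \<beta> = \<beta>" using bc by (simp add: rr_orth)
  have com: "root_refl \<beta> \<circ> root_refl \<gamma> = root_refl \<gamma> \<circ> root_refl \<beta>" using rr_commute[OF bc] .
  have comp: "\<And>v. root_refl \<beta> (root_refl \<gamma> v) = root_refl \<gamma> (root_refl \<beta> v)"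
    using com by (metis comp_apply)
  show ?G
  proof (cases "\<alpha> \<bullet> \<beta> = 0")
    case True
    hence ag: "\<alpha> \<bullet> \<gamma> \<noteq> 0" using nz2 by simp
    have "root_refl \<alpha> \<beta> = \<beta>" using True by (simp add: rr_orth inner_commute)
    moreover have "root_refl \<beta> \<alpha> = \<alpha>" using True by (simp add: rr_orth)
    ultimately show ?G using F1_ok[OF P ag n1 n2] n3 P by simp
  next
    case abn: False
    show ?G
    proof (cases "\<alpha> \<bullet> \<gamma> = 0")
      case True
      have "root_refl \<alpha> \<gamma> = \<gamma>" using True by (simp add: rr_orth inner_commute)
      moreover have "root_refl \<beta> \<alpha> \<bullet> \<gamma> = 0" using rr_inner[of \<beta> \<alpha> \<gamma>] bg True by simp
      hence "root_refl \<gamma> (root_refl \<beta> \<alpha>) = root_refl \<beta> \<alpha>" by (simp add: rr_orth)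
      ultimately show ?G using F2_ok[OF P abn bc n1 n2] n3 P by simp
    next
      case agn: False
      show ?G
      proof (rule ccontr)
        assume nG: "\<not> ?G"
        define Z where "Z = (\<lambda>r. Y (root_refl \<gamma> (root_refl \<beta> r)))"
        have lZ: "linear Z" unfolding Z_def
          using linear_compose[OF linear_compose[OF rr_linear[of \<beta>] rr_linear[of \<gamma>]] lY]
          by (simp add: o_def)
        have ZP: "\<And>r. r \<in> Phi \<Longrightarrow> Z r \<in> Phi" unfolding Z_def using YP refl_closed bP gP by auto
        have bnz: "\<beta> \<noteq> 0" "\<gamma> \<noteq> 0" "\<alpha> \<noteq> 0" using nz aP bP gP by auto
        have nF1: "\<not> (root_refl \<alpha> \<beta> \<in> pos \<and> - (Y (root_refl \<gamma> \<alpha>)) \<in> pos)"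
          using F1_ok[OF P agn n1 n2] nG by blast
        have nF3: "\<not> (root_refl \<beta> \<alpha> \<in> pos \<and> Y (root_refl \<gamma> (root_refl \<beta> (root_refl \<alpha> \<beta>))) \<in> pos)"
          using F3_ok[OF P agn bc lY n1 n3] nG by blast
        have nF2: "\<not> (root_refl \<alpha> \<gamma> \<in> pos \<and> - (Y (root_refl \<beta> \<alpha>)) \<in> pos)"
          using F2_ok[OF P abn bc n1 n2] nG by blast
        have nF4: "\<not> (root_refl \<gamma> \<alpha> \<in> pos \<and> Y (root_refl \<gamma> (root_refl \<beta> (root_refl \<alpha> \<gamma>))) \<in> pos)"
          using F4_ok[OF P abn bc lY n2 n3] nG by blast
        define p where "p = 2 * (\<alpha> \<bullet> \<beta>) / (\<beta> \<bullet> \<beta>)"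
        define p' where "p' = 2 * (\<alpha> \<bullet> \<beta>) / (\<alpha> \<bullet> \<alpha>)"
        define q where "q = 2 * (\<alpha> \<bullet> \<gamma>) / (\<gamma> \<bullet> \<gamma>)"
        define q' where "q' = 2 * (\<alpha> \<bullet> \<gamma>) / (\<alpha> \<bullet> \<alpha>)"
        have sba: "root_refl \<beta> \<alpha> = \<alpha> - p *\<^sub>R \<beta>" unfolding p_def rr_apply ..
        have sab: "root_refl \<alpha> \<beta> = \<beta> - p' *\<^sub>R \<alpha>" unfolding p'_def rr_apply by (simp add: inner_commute)
        have sga: "root_refl \<gamma> \<alpha> = \<alpha> - q *\<^sub>R \<gamma>" unfolding q_def rr_apply ..
        have sag: "root_refl \<alpha> \<gamma> = \<gamma> - q' *\<^sub>R \<alpha>" unfolding q'_def rr_apply by (simp add: inner_commute)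
        have ints: "p \<in> \<int>" "p' \<in> \<int>" "q \<in> \<int>" "q' \<in> \<int>"
          using integral[OF bP aP] integral[OF aP bP] integral[OF gP aP] integral[OF aP gP]
          unfolding p_def p'_def q_def q'_def by (simp_all add: inner_commute)
        have A: "\<alpha> \<bullet> \<alpha> > 0" "\<beta> \<bullet> \<beta> > 0" "\<gamma> \<bullet> \<gamma> > 0" using bnz by auto
        have sp: "p * p' > 0" "p > 0 \<longleftrightarrow> p' > 0" "q * q' > 0" "q > 0 \<longleftrightarrow> q' > 0"
          unfolding p_def p'_def q_def q'_def using A abn agn
          by (auto simp: zero_less_divide_iff zero_less_mult_iff simp del: inner_gt_zero_iff)
        define a1 where "a1 = ht \<alpha>"
        define b1 where "b1 = ht \<beta>"
        define c1 where "c1 = ht \<gamma>"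
        define a2 where "a2 = ht (Z \<alpha>)"
        define b2 where "b2 = ht (Z \<beta>)"
        define c2 where "c2 = ht (Z \<gamma>)"
        have Za: "- Z \<alpha> \<in> pos" unfolding Z_def using n3 .
        have Zb: "Z \<beta> = - Y (root_refl \<gamma> \<beta>)" unfolding Z_def
          using rr_self[OF bnz(1)] linear_neg[OF lY] by simp
        have Zg: "Z \<gamma> = - Y \<gamma>" unfolding Z_def
          using bg rr_self[OF bnz(2)] linear_neg[OF lY] by simp
        have h: "a1 > 0" "b1 > 0" "c1 > 0" "a2 < 0" "b2 > 0" "c2 > 0"
          unfolding a1_def b1_def c1_def a2_def b2_def c2_def
          using ht_pos P ht_neg[OF Za] ht_pos[of "Z \<beta>"] ht_pos[of "Z \<gamma>"] Zb Zg n1 n2 by auto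
        have lid: "linear (\<lambda>x::'a. x)" using linear_id by (simp add: id_def)
        have F1: "b1 - p' * a1 < 0 \<or> a2 - p * b2 > 0"
        proof (cases "root_refl \<alpha> \<beta> \<in> pos")
          case False
          have "ht (root_refl \<alpha> \<beta>) < 0" using ht_root_neg[OF refl_closed[OF aP bP] False] .
          thus ?thesis unfolding sab a1_def b1_def using ht_lin_comb[OF lid] by simp
        next
          case True
          hence "- (Y (root_refl \<gamma> \<alpha>)) \<notin> pos" using nF1 by blast
          moreover have "Y (root_refl \<gamma> \<alpha>) = Z (root_refl \<beta> \<alpha>)" unfolding Z_def by simp
          ultimately have "ht (Z (root_refl \<beta> \<alpha>)) > 0"
            using ht_root_pos[OF ZP[OF refl_closed[OF bP aP]]] by simp
          thus ?thesis unfolding sba a2_def b2_def using ht_lin_comb[OF lZ] by simp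
        qed
        have F3: "a1 - p * b1 < 0 \<or> b2 - p' * a2 < 0"
        proof (cases "root_refl \<beta> \<alpha> \<in> pos")
          case False
          have "ht (root_refl \<beta> \<alpha>) < 0" using ht_root_neg[OF refl_closed[OF bP aP] False] .
          thus ?thesis unfolding sba a1_def b1_def using ht_lin_comb[OF lid] by simp
        next
          case True
          hence "Z (root_refl \<alpha> \<beta>) \<notin> pos" using nF3 unfolding Z_def by blast
          hence "ht (Z (root_refl \<alpha> \<beta>)) < 0"
            using ht_root_neg[OF ZP[OF refl_closed[OF aP bP]]] by simp
          thus ?thesis unfolding sab a2_def b2_def using ht_lin_comb[OF lZ] by simp
        qed
        have F2: "c1 - q' * a1 < 0 \<or> a2 - q * c2 > 0"
        proof (cases "root_refl \<alpha> \<gamma> \<in> pos")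
          case False
          have "ht (root_refl \<alpha> \<gamma>) < 0" using ht_root_neg[OF refl_closed[OF aP gP] False] .
          thus ?thesis unfolding sag a1_def c1_def using ht_lin_comb[OF lid] by simp
        next
          case True
          hence "- (Y (root_refl \<beta> \<alpha>)) \<notin> pos" using nF2 by blast
          moreover have "Y (root_refl \<beta> \<alpha>) = Z (root_refl \<gamma> \<alpha>)" unfolding Z_def using comp by simp
          ultimately have "ht (Z (root_refl \<gamma> \<alpha>)) > 0"
            using ht_root_pos[OF ZP[OF refl_closed[OF gP aP]]] by simp
          thus ?thesis unfolding sga a2_def c2_def using ht_lin_comb[OF lZ] by simp
        qed
        have F4: "a1 - q * c1 < 0 \<or> c2 - q' * a2 < 0"
        proof (cases "root_refl \<gamma> \<alpha> \<in> pos")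
          case False
          have "ht (root_refl \<gamma> \<alpha>) < 0" using ht_root_neg[OF refl_closed[OF gP aP] False] .
          thus ?thesis unfolding sga a1_def c1_def using ht_lin_comb[OF lid] by simp
        next
          case True
          hence "Z (root_refl \<alpha> \<gamma>) \<notin> pos" using nF4 unfolding Z_def by blast
          hence "ht (Z (root_refl \<alpha> \<gamma>)) < 0"
            using ht_root_neg[OF ZP[OF refl_closed[OF aP gP]]] by simp
          thus ?thesis unfolding sag a2_def c2_def using ht_lin_comb[OF lZ] by simp
        qed
        note B = bessel[OF bc A]
        have bes: "p * p' + q * q' \<le> 4" using B(1) unfolding p_def p'_def q_def q'_def .
        have eq: "p * p' + q * q' = 4 \<Longrightarrow> 2 * a1 = p * b1 + q * c1 \<and> 2 * a2 = p * b2 + q * c2"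
        proof -
          assume e4: "p * p' + q * q' = 4"
          have av: "\<alpha> = (p / 2) *\<^sub>R \<beta> + (q / 2) *\<^sub>R \<gamma>"
            using B(2) e4 unfolding p_def p'_def q_def q'_def by blast
          have "ht \<alpha> = (p / 2) * ht \<beta> + (q / 2) * ht \<gamma>"
            by (subst av) (simp add: linear_add[OF ht_lin] linear_scale[OF ht_lin])
          moreover have "ht (Z \<alpha>) = (p / 2) * ht (Z \<beta>) + (q / 2) * ht (Z \<gamma>)"
            by (subst av) (simp add: linear_add[OF lZ] linear_scale[OF lZ] linear_add[OF ht_lin] linear_scale[OF ht_lin])
          ultimately show ?thesis unfolding a1_def b1_def c1_def a2_def b2_def c2_def by simp
        qed
        show False using core[OF ints sp h bes eq F1 F3 F2 F4] .
      qed
    qed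
  qed
qed

end


context rsys begin

lemma chain:
  assumes ws: "set ws \<subseteq> Phi" and P: "a \<in> pos" "b \<in> pos" "c \<in> pos"
    and n1: "- (refl_prod (rev ws) c) \<in> pos"
    and n2: "- (refl_prod (rev ws) (root_refl c b)) \<in> pos"
    and n3: "- (refl_prod (rev ws) (root_refl c (root_refl b a))) \<in> pos"
    and L: "int (weyl_length Delta (root_refl a \<circ> root_refl b \<circ> root_refl c \<circ> refl_prod ws)) = int (weyl_length Delta (refl_prod ws)) - 3"
  shows "int (weyl_length Delta (root_refl a \<circ> root_refl b \<circ> root_refl c \<circ> refl_prod ws)) = int (weyl_length Delta (root_refl b \<circ> root_refl c \<circ> refl_prod ws)) - 1 \<and>
           int (weyl_length Delta (root_refl b \<circ> root_refl c \<circ> refl_prod ws)) - 1 = int (weyl_length Delta (root_refl c \<circ> refl_prod ws)) - 2 \<and>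
           int (weyl_length Delta (root_refl c \<circ> refl_prod ws)) - 2 = int (weyl_length Delta (refl_prod ws)) - 3"
proof -
  have aP: "a \<in> Phi" and bP: "b \<in> Phi" and cP: "c \<in> Phi" using P pos_Phi by auto
  have e1: "refl_prod (c # ws) = root_refl c \<circ> refl_prod ws" by simp
  have e2: "refl_prod (b # c # ws) = root_refl b \<circ> root_refl c \<circ> refl_prod ws" by (simp add: o_assoc)
  have e3: "root_refl a \<circ> refl_prod (b # c # ws) = root_refl a \<circ> root_refl b \<circ> root_refl c \<circ> refl_prod ws"
    by (simp add: o_assoc)
  have e2': "root_refl b \<circ> refl_prod (c # ws) = root_refl b \<circ> root_refl c \<circ> refl_prod ws"
    by (simp add: o_assoc)
  have d1: "weyl_length Delta (root_refl c \<circ> refl_prod ws) + 1 \<le> weyl_length Delta (refl_prod ws)"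
    using dec[OF ws P(3) n1] .
  have "- (refl_prod (rev (c # ws)) b) \<in> pos" using n2 by simp
  from dec[OF _ P(2) this] ws cP
  have d2: "weyl_length Delta (root_refl b \<circ> root_refl c \<circ> refl_prod ws) + 1 \<le> weyl_length Delta (root_refl c \<circ> refl_prod ws)"
    unfolding e1 o_assoc by simp
  have "- (refl_prod (rev (b # c # ws)) a) \<in> pos" using n3 by simp
  from dec[OF _ P(1) this] ws cP bP
  have d3: "weyl_length Delta (root_refl a \<circ> root_refl b \<circ> root_refl c \<circ> refl_prod ws) + 1 \<le> weyl_length Delta (root_refl b \<circ> root_refl c \<circ> refl_prod ws)"
    unfolding e2 o_assoc by simp
  show ?thesis using d1 d2 d3 L by linarith
qed

lemma hyps:
  assumes ws: "set ws \<subseteq> Phi" and P: "a \<in> pos" "b \<in> pos" "c \<in> pos"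
    and h1: "int (weyl_length Delta (root_refl a \<circ> root_refl b \<circ> root_refl c \<circ> refl_prod ws)) = int (weyl_length Delta (root_refl b \<circ> root_refl c \<circ> refl_prod ws)) - 1"
    and h2: "int (weyl_length Delta (root_refl b \<circ> root_refl c \<circ> refl_prod ws)) - 1 = int (weyl_length Delta (root_refl c \<circ> refl_prod ws)) - 2"
    and h3: "int (weyl_length Delta (root_refl c \<circ> refl_prod ws)) - 2 = int (weyl_length Delta (refl_prod ws)) - 3"
  shows "- (refl_prod (rev ws) c) \<in> pos" "- (refl_prod (rev ws) (root_refl c b)) \<in> pos"
    "- (refl_prod (rev ws) (root_refl c (root_refl b a))) \<in> pos"
proof -
  have aP: "a \<in> Phi" and bP: "b \<in> Phi" and cP: "c \<in> Phi" using P pos_Phi by auto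
  have e1: "refl_prod (c # ws) = root_refl c \<circ> refl_prod ws" by simp
  have e2: "refl_prod (b # c # ws) = root_refl b \<circ> root_refl c \<circ> refl_prod ws" by (simp add: o_assoc)
  have e3: "root_refl a \<circ> refl_prod (b # c # ws) = root_refl a \<circ> root_refl b \<circ> root_refl c \<circ> refl_prod ws"
    by (simp add: o_assoc)
  have e2': "root_refl b \<circ> refl_prod (c # ws) = root_refl b \<circ> root_refl c \<circ> refl_prod ws"
    by (simp add: o_assoc)
  show "- (refl_prod (rev ws) c) \<in> pos"
    using neg_of_dec[OF ws P(3)] h3 by linarith
  have "weyl_length Delta (root_refl b \<circ> refl_prod (c # ws)) < weyl_length Delta (refl_prod (c # ws))"
    unfolding e1 o_assoc using h2 by linarith
  from neg_of_dec[OF _ P(2) this] ws cP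
  show "- (refl_prod (rev ws) (root_refl c b)) \<in> pos" by simp
  have "weyl_length Delta (root_refl a \<circ> refl_prod (b # c # ws)) < weyl_length Delta (refl_prod (b # c # ws))"
    unfolding e2 o_assoc using h1 by linarith
  from neg_of_dec[OF _ P(1) this] ws cP bP
  show "- (refl_prod (rev ws) (root_refl c (root_refl b a))) \<in> pos" by simp
qed

end

theorem mainTheorem19:
  fixes \<Phi> \<Delta> :: "'a::euclidean_space set"
    and \<alpha> \<beta> \<gamma> :: 'a and w :: "'a \<Rightarrow> 'a"
  assumes "root_system \<Phi>" and "root_basis \<Phi> \<Delta>"
    and "\<alpha> \<in> pos_roots \<Phi> \<Delta>" "\<beta> \<in> pos_roots \<Phi> \<Delta>" "\<gamma> \<in> pos_roots \<Phi> \<Delta>"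
    and "w \<in> weyl_group \<Phi>"
    and "int (weyl_length \<Delta> (root_refl \<alpha> \<circ> root_refl \<beta> \<circ> root_refl \<gamma> \<circ> w)) = int (weyl_length \<Delta> (root_refl \<beta> \<circ> root_refl \<gamma> \<circ> w)) - 1"
    and "int (weyl_length \<Delta> (root_refl \<beta> \<circ> root_refl \<gamma> \<circ> w)) - 1 = int (weyl_length \<Delta> (root_refl \<gamma> \<circ> w)) - 2"
    and "int (weyl_length \<Delta> (root_refl \<gamma> \<circ> w)) - 2 = int (weyl_length \<Delta> w) - 3"
    and "\<alpha> \<bullet> \<beta> \<noteq> 0 \<or> \<alpha> \<bullet> \<gamma> \<noteq> 0"
  shows "\<exists>\<alpha>' \<in> pos_roots \<Phi> \<Delta>. \<exists>\<beta>' \<in> pos_roots \<Phi> \<Delta>. \<exists>\<gamma>' \<in> pos_roots \<Phi> \<Delta>.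
           \<beta>' \<bullet> \<gamma>' \<noteq> 0 \<and>
           root_refl \<alpha> \<circ> root_refl \<beta> \<circ> root_refl \<gamma> = root_refl \<alpha>' \<circ> root_refl \<beta>' \<circ> root_refl \<gamma>' \<and>
           int (weyl_length \<Delta> (root_refl \<alpha>' \<circ> root_refl \<beta>' \<circ> root_refl \<gamma>' \<circ> w)) = int (weyl_length \<Delta> (root_refl \<beta>' \<circ> root_refl \<gamma>' \<circ> w)) - 1 \<and>
           int (weyl_length \<Delta> (root_refl \<beta>' \<circ> root_refl \<gamma>' \<circ> w)) - 1 = int (weyl_length \<Delta> (root_refl \<gamma>' \<circ> w)) - 2 \<and>
           int (weyl_length \<Delta> (root_refl \<gamma>' \<circ> w)) - 2 = int (weyl_length \<Delta> w) - 3"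
proof -
  interpret rsys \<Phi> \<Delta> using assms(1,2) by unfold_locales
  obtain ws where ws: "set ws \<subseteq> \<Phi>" "w = refl_prod ws" using assms(6) unfolding weyl_group_def by blast
  define Y where "Y = refl_prod (rev ws)"
  have lY: "linear Y" unfolding Y_def by (rule refl_prod_linear)
  have YP: "\<And>r. r \<in> \<Phi> \<Longrightarrow> Y r \<in> \<Phi>" unfolding Y_def using word_maps ws(1) by simp
  note H = hyps[OF ws(1) assms(3,4,5) assms(7,8,9)[unfolded ws(2)]]
  show ?thesis
  proof (cases "\<beta> \<bullet> \<gamma> = 0")
    case False
    thus ?thesis using assms(3,4,5,7,8,9) by blast
  next
    case True
    from combi[OF assms(3,4,5) True assms(10) lY YP H[folded Y_def]]
    obtain a b c where abc: "a \<in> pos_roots \<Phi> \<Delta>" "b \<in> pos_roots \<Phi> \<Delta>" "c \<in> pos_roots \<Phi> \<Delta>"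
      "b \<bullet> c \<noteq> 0" "root_refl \<alpha> \<circ> root_refl \<beta> \<circ> root_refl \<gamma> = root_refl a \<circ> root_refl b \<circ> root_refl c"
      "- (Y c) \<in> pos" "- (Y (root_refl c b)) \<in> pos" "- (Y (root_refl c (root_refl b a))) \<in> pos"
      by blast
    have L: "int (weyl_length \<Delta> (root_refl a \<circ> root_refl b \<circ> root_refl c \<circ> refl_prod ws)) = int (weyl_length \<Delta> (refl_prod ws)) - 3"
      using assms(7,8,9) abc(5) ws(2) by simp
    have "int (weyl_length \<Delta> (root_refl a \<circ> root_refl b \<circ> root_refl c \<circ> refl_prod ws)) = int (weyl_length \<Delta> (root_refl b \<circ> root_refl c \<circ> refl_prod ws)) - 1 \<and>
           int (weyl_length \<Delta> (root_refl b \<circ> root_refl c \<circ> refl_prod ws)) - 1 = int (weyl_length \<Delta> (root_refl c \<circ> refl_prod ws)) - 2 \<and>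
           int (weyl_length \<Delta> (root_refl c \<circ> refl_prod ws)) - 2 = int (weyl_length \<Delta> (refl_prod ws)) - 3"
      using chain[OF ws(1) abc(1,2,3) abc(6,7,8)[unfolded Y_def] L] .
    thus ?thesis using abc(1-5) ws(2) by blast
  qed
qed



end
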